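(* $$\sum_{n=0}^{\infty}\Big(\sum_{j=0}^{n}\frac{1}{(2j+1)(2(n-j)+1)}\Big)^2=\frac{\pi^4}{32}.$$ Equivalently, $$1^2+\Big(1\cdot\tfrac13+\tfrac13\cdot 1\Big)^2+\Big(1\cdot\tfrac15+\tfrac13\cdot\tfrac13+\tfrac15\cdot 1\Big)^2+\Big(1\cdot\tfrac17+\tfrac13\cdot\tfrac15+\tfrac15\cdot\tfrac13+\tfrac17\cdot 1\Big)^2+\cdots=\frac{\pi^4}{32}.$$ *)

theory Defs
  imports "HOL-Analysis.Analysis"
begin

end

theory Submission imports Defs "HOL-Real_Asymp.Real_Asymp" begin

definition cc :: "nat \<Rightarrow> real" where "cc j = 1 / (2 * real j + 1)"
definition aa :: "nat \<Rightarrow> real" where "aa n = (\<Sum>j\<le>n. cc j * cc (n - j))"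
definition oh :: "nat \<Rightarrow> real" where "oh n = (\<Sum>j\<le>n. cc j)"

lemma cc_pos: "cc j > 0" by (simp add: cc_def)

lemma cc_pair: "j \<le> n \<Longrightarrow> cc j * cc (n - j) = (cc j + cc (n - j)) / (2 * real n + 2)"
proof -
  assume "j \<le> n"
  then obtain k where k: "n = j + k" using le_Suc_ex by blast
  have p: "2 * real j + 1 > 0" "2 * real k + 1 > 0" by auto
  have "cc j + cc k = (2 * real j + 1 + (2 * real k + 1)) * (cc j * cc k)"
    using p by (simp add: cc_def field_simps)
  thus ?thesis unfolding k using p by (simp add: field_simps)
qed

lemma aa_eq: "aa n = oh n / (real n + 1)"
proof -
  have "aa n = (\<Sum>j\<le>n. (cc j + cc (n - j)) / (2 * real n + 2))"
    unfolding aa_def by (intro sum.cong) (auto simp: cc_pair)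
  also have "\<dots> = ((\<Sum>j\<le>n. cc j) + (\<Sum>j\<le>n. cc (n - j))) / (2 * real n + 2)"
    by (simp add: add_divide_distrib sum.distrib sum_divide_distrib)
  also have "(\<Sum>j\<le>n. cc (n - j)) = (\<Sum>j\<le>n. cc j)"
    using sum.atLeastAtMost_rev[of cc 0 n] by (simp add: atMost_atLeast0)
  finally show ?thesis by (simp add: oh_def field_simps)
qed

definition r4 :: "real \<Rightarrow> real" where "r4 x = sqrt (sqrt x)"

lemma r4_pow: "x \<ge> 0 \<Longrightarrow> r4 x ^ 4 = x"
proof -
  assume "x \<ge> 0"
  have "r4 x ^ 4 = (sqrt (sqrt x) ^ 2) ^ 2" by (simp add: r4_def power_mult[symmetric])
  also have "\<dots> = x" using \<open>x \<ge> 0\<close> by simp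
  finally show ?thesis .
qed

lemma step_bound: "1 / (real j + 1) \<le> 4 * (r4 (real j + 1) - r4 (real j))"
proof -
  define x where "x = r4 (real j + 1)"
  define y where "y = r4 (real j)"
  have x4: "x ^ 4 = real j + 1" unfolding x_def by (rule r4_pow) simp
  have y4: "y ^ 4 = real j" unfolding y_def by (rule r4_pow) simp
  have y0: "y \<ge> 0" by (simp add: y_def r4_def)
  have x1: "x \<ge> 1" unfolding x_def r4_def by simp
  have yx: "y \<le> x" unfolding x_def y_def r4_def by simp
  have "1 = x^4 - y^4" using x4 y4 by simp
  also have "\<dots> = (x - y) * (x^3 + x^2*y + x*y^2 + y^3)" by (simp add: algebra_simps power2_eq_square power3_eq_cube power4_eq_xxxx)
  also have "\<dots> \<le> (x - y) * (4 * x^4)"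
  proof (rule mult_left_mono)
    have "x^2*y \<le> x^3" using yx y0 x1 by (simp add: power2_eq_square power3_eq_cube mult_left_mono)
    moreover have "x*y^2 \<le> x^3" using yx y0 x1 by (simp add: power2_eq_square power3_eq_cube mult_mono)
    moreover have "y^3 \<le> x^3" using yx y0 by (simp add: power_mono)
    moreover have "x^3 \<le> x^4" using x1 by (simp add: power_increasing)
    ultimately show "x^3 + x^2*y + x*y^2 + y^3 \<le> 4 * x^4" by linarith
  qed (use yx in simp)
  finally have "1 \<le> (x - y) * (4 * (real j + 1))" using x4 by simp
  hence "1 / (real j + 1) \<le> 4 * (x - y)" by (simp add: field_simps)
  thus ?thesis by (simp add: x_def y_def)
qed

lemma harm_bound: "(\<Sum>j\<le>n. 1 / (real j + 1)) \<le> 4 * r4 (real n + 1)"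
proof (induction n)
  case 0 then show ?case using step_bound[of 0] by (simp add: r4_def)
next
  case (Suc n)
  have "(\<Sum>j\<le>Suc n. 1 / (real j + 1)) = (\<Sum>j\<le>n. 1 / (real j + 1)) + 1 / (real (Suc n) + 1)" by simp
  also have "\<dots> \<le> 4 * r4 (real n + 1) + 4 * (r4 (real (Suc n) + 1) - r4 (real (Suc n)))"
    using Suc step_bound[of "Suc n"] by linarith
  also have "r4 (real (Suc n)) = r4 (real n + 1)" by (simp add: add.commute)
  finally show ?case by simp
qed

lemma oh_bound: "oh n \<le> 4 * r4 (real n + 1)"
proof -
  have "oh n \<le> (\<Sum>j\<le>n. 1 / (real j + 1))" unfolding oh_def cc_def
    by (intro sum_mono) (simp add: frac_le)
  thus ?thesis using harm_bound[of n] by linarith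
qed

lemma oh_nonneg: "oh n \<ge> 0" unfolding oh_def using cc_pos by (simp add: sum_nonneg less_imp_le)

lemma aa_sq_bound: "aa n ^ 2 \<le> 16 * (real n + 1) powr (-3/2)"
proof -
  have b: "aa n \<le> 4 * r4 (real n + 1) / (real n + 1)" unfolding aa_eq
    using oh_bound by (simp add: divide_right_mono)
  have a0: "aa n \<ge> 0" unfolding aa_eq using oh_nonneg by simp
  have "aa n ^ 2 \<le> (4 * r4 (real n + 1) / (real n + 1)) ^ 2" using b a0 by (simp add: power_mono)
  also have "\<dots> = 16 * sqrt (real n + 1) / (real n + 1) ^ 2"
    by (simp add: r4_def power_divide power_mult_distrib)
  also have "\<dots> = 16 * (real n + 1) powr (-3/2)"
  proof -
    have "(real n + 1) powr (3/2) = (real n + 1) powr (2 - 1/2)" by simp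
    also have "\<dots> = (real n + 1) powr 2 / (real n + 1) powr (1/2)"
      by (rule powr_diff)
    also have "\<dots> = (real n + 1) ^ 2 / sqrt (real n + 1)"
      by (simp add: powr_half_sqrt)
    finally show ?thesis by (simp add: powr_minus_divide field_simps)
  qed
  finally show ?thesis .
qed

lemma summable_aa: "summable (\<lambda>n. aa n ^ 2)"
proof (rule summable_comparison_test')
  have "summable (\<lambda>n. real n powr (-3/2))" by (simp add: summable_real_powr_iff)
  hence "summable (\<lambda>n. real (Suc n) powr (-3/2))" by (subst summable_Suc_iff)
  thus "summable (\<lambda>n. 16 * (real n + 1) powr (-3/2))" by (simp add: summable_mult add.commute)
  show "\<And>n. n \<ge> 0 \<Longrightarrow> norm (aa n ^ 2) \<le> 16 * (real n + 1) powr (-3/2)" using aa_sq_bound by simp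
qed


lemma inv_sq_form: "(\<lambda>n::nat. 1 / (real n + 1) ^ 2) sums (pi ^ 2 / 6)"
  using inverse_squares_sums by (simp add: add.commute)

lemma L_sums: "(\<lambda>j. cc j ^ 2) sums (pi ^ 2 / 8)"
proof -
  let ?f = "\<lambda>n::nat. 1 / (real n + 1) ^ 2"
  have g: "(\<lambda>n. sum ?f {n * 2..<n * 2 + 2}) sums (pi ^ 2 / 6)"
    by (rule sums_group[OF inv_sq_form]) simp
  have e: "sum ?f {n * 2..<n * 2 + 2} = cc n ^ 2 + (1/4) * ?f n" for n
  proof -
    have "{n * 2..<n * 2 + 2} = {2*n, 2*n+1}" by auto
    hence "sum ?f {n * 2..<n * 2 + 2} = ?f (2*n) + ?f (2*n+1)" by simp
    also have "\<dots> = cc n ^ 2 + (1/4) * ?f n"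
      by (simp add: cc_def field_simps power2_eq_square)
    finally show ?thesis .
  qed
  have g2: "(\<lambda>n. cc n ^ 2 + (1/4) * ?f n) sums (pi ^ 2 / 6)" using g by (simp only: e)
  have q: "(\<lambda>n. (1/4) * ?f n) sums ((1/4) * (pi ^ 2 / 6))" by (rule sums_mult[OF inv_sq_form])
  have "(\<lambda>n. (cc n ^ 2 + (1/4) * ?f n) - (1/4) * ?f n) sums (pi ^ 2 / 6 - (1/4) * (pi ^ 2 / 6))"
    by (rule sums_diff[OF g2 q])
  thus ?thesis by simp
qed

lemma cc_lim: "(\<lambda>j. cc (j + i)) \<longlonglongrightarrow> 0"
proof -
  have "(\<lambda>j. 1 / (2 * real (j + i) + 1)) \<longlonglongrightarrow> 0" by real_asymp
  thus ?thesis by (simp add: cc_def)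
qed

lemma tele: "(\<lambda>j. cc j - cc (j + Suc m)) sums oh m"
proof -
  define F where "F j = (\<Sum>i\<le>m. cc (j + i))" for j
  have F0: "F \<longlonglongrightarrow> 0" unfolding F_def
    by (rule tendsto_null_sum) (rule cc_lim)
  have d: "F j - F (Suc j) = cc j - cc (j + Suc m)" for j
  proof -
    have "F j + cc (j + Suc m) = (\<Sum>i\<le>Suc m. cc (j + i))" by (simp add: F_def)
    also have "\<dots> = cc j + F (Suc j)" unfolding F_def by (subst sum.atMost_Suc_shift) simp
    finally show ?thesis by simp
  qed
  have "(\<lambda>j. F j - F (Suc j)) sums (F 0 - 0)" by (rule telescope_sums'[OF F0])
  hence "(\<lambda>j. cc j - cc (j + Suc m)) sums (F 0)" by (simp only: d diff_zero)
  thus ?thesis by (simp add: F_def oh_def)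
qed

lemma cc_diff: "cc a - cc (a + d) = 2 * real d * (cc a * cc (a + d))"
  by (simp add: cc_def field_simps)

lemma has_sum_prod_nonneg:
  fixes f g :: "'a \<Rightarrow> real"
  assumes f: "(f has_sum A) UNIV" and g: "(g has_sum B) UNIV"
    and f0: "\<And>x. f x \<ge> 0" and g0: "\<And>y. g y \<ge> 0"
  shows "((\<lambda>(x,y). f x * g y) has_sum (A * B)) (UNIV \<times> UNIV)"
proof -
  have inner: "((\<lambda>y. (\<lambda>(x,y). f x * g y) (x, y)) has_sum (f x * B)) UNIV" for x
    using has_sum_cmult_right[OF g, of "f x"] by simp
  have outer: "((\<lambda>x. f x * B) has_sum (A * B)) UNIV" by (rule has_sum_cmult_left[OF f])
  have s: "(\<lambda>(x,y). f x * g y) summable_on Sigma UNIV (\<lambda>_. UNIV)"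
    by (rule summable_on_SigmaI[OF inner]) (use outer f0 g0 in \<open>auto simp: summable_on_def\<close>)
  show ?thesis by (rule has_sum_SigmaI[OF inner outer s])
qed


definition tq :: "nat \<times> nat \<times> nat \<Rightarrow> real" where
  "tq p = (case p of (n, j, l) \<Rightarrow> cc j * cc (n - j) * cc l * cc (n - l))"

lemma tq_nonneg: "tq p \<ge> 0"
  using cc_pos by (auto simp: tq_def split: prod.splits intro!: mult_nonneg_nonneg less_imp_le)

lemma main_value: "(\<lambda>n. aa n ^ 2) sums (2 * (pi ^ 2 / 8) ^ 2)"
proof -
  define S where "S = suminf (\<lambda>n. aa n ^ 2)"
  define L where "L = pi ^ 2 / 8"
  have aa0: "aa n \<ge> 0" for n unfolding aa_eq using oh_nonneg by simp
  have hS: "((\<lambda>n. aa n ^ 2) has_sum S) UNIV"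
    using summable_aa by (auto simp: S_def intro!: sums_nonneg_imp_has_sum summable_sums)
  define Q where "Q = Sigma (UNIV :: nat set) (\<lambda>n. {..n} \<times> {..n})"
  have innerQ: "((\<lambda>y. tq (n, y)) has_sum aa n ^ 2) ({..n} \<times> {..n})" for n
  proof (rule has_sum_finiteI)
    show "finite ({..n} \<times> {..n})" by simp
    have "aa n ^ 2 = (\<Sum>j\<le>n. cc j * cc (n - j)) * (\<Sum>l\<le>n. cc l * cc (n - l))"
      by (simp add: aa_def power2_eq_square)
    also have "\<dots> = (\<Sum>(j,l)\<in>{..n} \<times> {..n}. cc j * cc (n - j) * (cc l * cc (n - l)))"
      by (simp add: sum_product sum.cartesian_product)
    also have "\<dots> = sum (\<lambda>y. tq (n, y)) ({..n} \<times> {..n})"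
      by (intro sum.cong) (auto simp: tq_def)
    finally show "aa n ^ 2 = sum (\<lambda>y. tq (n, y)) ({..n} \<times> {..n})" .
  qed
  have sumQ: "tq summable_on Q" unfolding Q_def
    by (rule summable_on_SigmaI[OF innerQ]) (use hS tq_nonneg in \<open>auto simp: summable_on_def\<close>)
  have hQ: "(tq has_sum S) Q" unfolding Q_def
    by (rule has_sum_SigmaI[OF innerQ hS]) (use sumQ Q_def in simp)

  define Q0 :: "(nat \<times> nat \<times> nat) set" where "Q0 = {(n, j, l). j = l \<and> j \<le> n}"
  define Q1 :: "(nat \<times> nat \<times> nat) set" where "Q1 = {(n, j, l). j < l \<and> l \<le> n}"
  define Q2 :: "(nat \<times> nat \<times> nat) set" where "Q2 = {(n, j, l). l < j \<and> j \<le> n}"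

  have hL: "((\<lambda>j. cc j ^ 2) has_sum L) UNIV"
    using L_sums by (auto simp: L_def intro!: sums_nonneg_imp_has_sum)
  have hP: "((\<lambda>(x,y). cc x ^ 2 * cc y ^ 2) has_sum (L * L)) (UNIV \<times> UNIV)"
    by (rule has_sum_prod_nonneg[OF hL hL]) auto
  have "((\<lambda>(x,y). cc x ^ 2 * cc y ^ 2) has_sum (L * L)) (UNIV \<times> UNIV) = (tq has_sum (L * L)) Q0"
    by (rule has_sum_reindex_bij_witness[where i = "\<lambda>(n, j, l). (j, n - j)" and j = "\<lambda>(j, k). (j + k, j, j)"])
       (auto simp: Q0_def tq_def power2_eq_square)
  with hP have h0: "(tq has_sum (L * L)) Q0" by simp

  define ff where "ff m j = cc j - cc (j + Suc m)" for m j
  define g where "g p = (case p of (m, j, k) \<Rightarrow> ff m j * ff m k / (4 * (real m + 1) ^ 2))" for p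
  have ff0: "ff m j \<ge> 0" for m j unfolding ff_def cc_def by (simp add: frac_le)
  have bij1: "(g has_sum X) (UNIV \<times> UNIV \<times> UNIV) = (tq has_sum X) Q1" for X
  proof (rule has_sum_reindex_bij_witness[where i = "\<lambda>(n, j, l). (l - j - 1, j, n - l)" and j = "\<lambda>(m, j, k). (j + k + m + 1, j, j + m + 1)"])
    fix a :: "nat \<times> nat \<times> nat"
    obtain m j k where a: "a = (m, j, k)" by (cases a) auto
    have e1: "ff m j = 2 * real (Suc m) * (cc j * cc (j + Suc m))" unfolding ff_def by (rule cc_diff)
    have e2: "ff m k = 2 * real (Suc m) * (cc k * cc (k + Suc m))" unfolding ff_def by (rule cc_diff)
    show "tq ((\<lambda>(m, j, k). (j + k + m + 1, j, j + m + 1)) a) = g a"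
    proof -
      have m: "ff m j * ff m k = (4 * (real m + 1) ^ 2) * (cc j * cc (j + Suc m) * cc k * cc (k + Suc m))"
        by (simp add: e1 e2 power2_eq_square algebra_simps)
      have nz: "4 * (real m + 1) ^ 2 \<noteq> 0" by simp
      have "g a = cc j * cc (j + Suc m) * cc k * cc (k + Suc m)"
        unfolding a g_def by (simp only: prod.case m nonzero_mult_div_cancel_left[OF nz])
      thus ?thesis unfolding a by (simp add: tq_def algebra_simps)
    qed
  qed (auto simp: Q1_def)
  have sum1: "tq summable_on Q1"
    by (rule summable_on_subset_banach[OF sumQ]) (auto simp: Q_def Q1_def)
  have sumg: "g summable_on (UNIV \<times> UNIV \<times> UNIV)"
    using sum1 bij1 by (auto simp: summable_on_def)
  have innerg: "((\<lambda>y. g (m, y)) has_sum (aa m ^ 2 / 4)) (UNIV \<times> UNIV)" for m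
  proof -
    have hf: "(ff m has_sum oh m) UNIV"
    proof -
      have "ff m = (\<lambda>j. cc j - cc (j + Suc m))" by (rule ext) (simp add: ff_def)
      moreover have "\<And>j. cc j - cc (j + Suc m) \<ge> 0" using ff0 by (simp add: ff_def)
      ultimately show ?thesis using tele[of m] by (simp add: sums_nonneg_imp_has_sum)
    qed
    have "((\<lambda>(x,y). ff m x * ff m y) has_sum (oh m * oh m)) (UNIV \<times> UNIV)"
      by (rule has_sum_prod_nonneg[OF hf hf ff0 ff0])
    hence H: "((\<lambda>y. (\<lambda>(x,y). ff m x * ff m y) y * (1 / (4 * (real m + 1) ^ 2))) has_sum
             (oh m * oh m * (1 / (4 * (real m + 1) ^ 2)))) (UNIV \<times> UNIV)"
      by (rule has_sum_cmult_left)
    have E: "oh m * oh m * (1 / (4 * (real m + 1) ^ 2)) = aa m ^ 2 / 4"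
      by (simp add: aa_eq power2_eq_square field_simps)
    from H have "((\<lambda>y. (\<lambda>(x,y). ff m x * ff m y) y * (1 / (4 * (real m + 1) ^ 2))) has_sum
             (aa m ^ 2 / 4)) (UNIV \<times> UNIV)" unfolding E .
    thus ?thesis by (simp add: g_def case_prod_unfold)
  qed
  have outerg: "((\<lambda>m. aa m ^ 2 / 4) has_sum (S / 4)) UNIV"
    using has_sum_cmult_left[OF hS, of "1/4"] by simp
  have hg: "(g has_sum (S / 4)) (UNIV \<times> UNIV \<times> UNIV)"
    by (rule has_sum_SigmaI[OF innerg outerg]) (use sumg in simp)
  have h1: "(tq has_sum (S / 4)) Q1" using hg bij1 by simp
  have "(tq has_sum (S / 4)) Q1 = (tq has_sum (S / 4)) Q2"
    by (rule has_sum_reindex_bij_witness[where i = "\<lambda>(n, j, l). (n, l, j)" and j = "\<lambda>(n, j, l). (n, l, j)"])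
       (auto simp: Q1_def Q2_def tq_def)
  with h1 have h2: "(tq has_sum (S / 4)) Q2" by simp

  have h01: "(tq has_sum (L * L + S / 4)) (Q0 \<union> Q1)"
    by (rule has_sum_Un_disjoint[OF h0 h1]) (auto simp: Q0_def Q1_def)
  have h012: "(tq has_sum (L * L + S / 4 + S / 4)) (Q0 \<union> Q1 \<union> Q2)"
    by (rule has_sum_Un_disjoint[OF h01 h2]) (auto simp: Q0_def Q1_def Q2_def)
  have "Q0 \<union> Q1 \<union> Q2 = Q" by (auto simp: Q0_def Q1_def Q2_def Q_def)
  with h012 hQ have "S = L * L + S / 4 + S / 4" using has_sum_unique by metis
  hence "S = 2 * L ^ 2" by (simp add: power2_eq_square)
  thus ?thesis using summable_sums[OF summable_aa] by (simp add: S_def L_def)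
qed


theorem mainTheorem1:
  shows "(\<lambda>n::nat. (\<Sum>j=0..n. 1 / ((2 * real j + 1) * (2 * real (n - j) + 1))) ^ 2)
           sums (pi ^ 4 / 32)"
proof -
  have e: "(\<Sum>j=0..n. 1 / ((2 * real j + 1) * (2 * real (n - j) + 1))) = aa n" for n
    unfolding aa_def atLeast0AtMost by (intro sum.cong) (simp_all add: cc_def)
  have v: "2 * (pi ^ 2 / 8) ^ 2 = pi ^ 4 / 32" by (simp add: power2_eq_square power4_eq_xxxx)
  show ?thesis using main_value unfolding e v .
qed

end
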